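(* Let $W\in\mathbb{R}^{d\times d}$ be symmetric positive semidefinite with $\mathrm{tr}(W)=1$, $\sum_{i,j}|W_{ij}|\le k$, and $\mathrm{rank}(W)=r$. Then $\sum_{i=1}^d\sqrt{W_{ii}}\le\sqrt{rk}$. *)

theory Defs
  imports "HOL-Analysis.Analysis"
begin

definition psd :: "real^'n^'n \<Rightarrow> bool" where
  "psd W \<longleftrightarrow> (\<forall>x::real^'n. 0 \<le> x \<bullet> (W *v x))"

end

theory Submission imports Defs begin
lemma ax: fixes W :: "real^'n^'n" shows "axis i 1 \<bullet> (W *v axis j 1) = W$i$j"
  by (simp add: matrix_vector_mult_basis column_def inner_axis' )
lemma quad: fixes a b c :: real assumes "a \<ge> 0" "\<And>t. 0 \<le> a*t^2 + 2*b*t + c" shows "b^2 \<le> a*c"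
proof (cases "a = 0")
  case True
  show ?thesis proof (rule ccontr)
    assume "\<not> ?thesis" then have "b \<noteq> 0" using True by simp
    have "0 \<le> 2*b*(-(c+1)/(2*b)) + c" using assms(2)[of "-(c+1)/(2*b)"] True by simp
    also have "\<dots> = -1" using \<open>b\<noteq>0\<close> by (simp add: field_simps)
    finally show False by simp
  qed
next
  case False
  then have a: "a > 0" using assms(1) by simp
  have "0 \<le> a*(-b/a)^2 + 2*b*(-b/a) + c" by (rule assms(2))
  also have "\<dots> = c - b^2/a" using a by (simp add: field_simps power2_eq_square)
  finally show ?thesis using a by (simp add: field_simps)
qed
lemma psd_entry: fixes W :: "real^'n^'n" assumes "transpose W = W" "psd W"
  shows "(W$i$j)^2 \<le> W$i$i * W$j$j" "0 \<le> W$i$i"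
proof -
  have sym: "W$j$i = W$i$j" using assms(1) by (metis transpose_def vec_lambda_beta)
  have Q: "0 \<le> x \<bullet> (W *v x)" for x using assms(2) unfolding psd_def by blast
  show d: "0 \<le> W$i$i" using Q[of "axis i 1"] by (simp add: ax)
  show "(W$i$j)^2 \<le> W$i$i * W$j$j"
  proof (rule quad[OF d])
    fix t
    have "0 \<le> (t *\<^sub>R axis i 1 + axis j 1) \<bullet> (W *v (t *\<^sub>R axis i 1 + axis j 1))" by (rule Q)
    also have "\<dots> = W $ i $ i * t\<^sup>2 + 2 * W $ i $ j * t + W $ j $ j"
      by (simp add: matrix_vector_right_distrib matrix_vector_mult_scaleR inner_add_left inner_add_right ax sym algebra_simps power2_eq_square)
    finally show "0 \<le> W $ i $ i * t\<^sup>2 + 2 * W $ i $ j * t + W $ j $ j" .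
  qed
qed

lemma expand:
  fixes Bs :: "('a::euclidean_space) set"
  assumes fin: "finite Bs" and orth: "pairwise orthogonal Bs" and nrm: "\<And>x. x \<in> Bs \<Longrightarrow> norm x = 1"
    and c: "c \<in> span Bs"
  shows "c = (\<Sum>b\<in>Bs. (b \<bullet> c) *\<^sub>R b)"
proof -
  have "span Bs \<subseteq> {y. y = (\<Sum>b\<in>Bs. (b \<bullet> y) *\<^sub>R b)}"
  proof (rule span_minimal)
    show "Bs \<subseteq> {y. y = (\<Sum>b\<in>Bs. (b \<bullet> y) *\<^sub>R b)}"
    proof
      fix b0 assume b0: "b0 \<in> Bs"
      have "(\<Sum>b\<in>Bs. (b \<bullet> b0) *\<^sub>R b) = (\<Sum>b\<in>Bs. if b = b0 then b else 0)"
      proof (rule sum.cong)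
        fix b assume b: "b \<in> Bs"
        show "(b \<bullet> b0) *\<^sub>R b = (if b = b0 then b else 0)"
        proof (cases "b = b0")
          case True then show ?thesis using nrm[OF b] by (simp add: norm_eq_1)
        next
          case False then have "b \<bullet> b0 = 0" using orth b b0 unfolding pairwise_def orthogonal_def by blast
          then show ?thesis using False by simp
        qed
      qed simp
      also have "\<dots> = b0" using b0 fin by simp
      finally show "b0 \<in> {y. y = (\<Sum>b\<in>Bs. (b \<bullet> y) *\<^sub>R b)}" by (simp only: mem_Collect_eq)
    qed
  next
    show "subspace {y. y = (\<Sum>b\<in>Bs. (b \<bullet> y) *\<^sub>R b)}"
      unfolding subspace_def
    proof (intro conjI allI impI ballI)
      fix c :: real and x assume "x \<in> {y. y = (\<Sum>b\<in>Bs. (b \<bullet> y) *\<^sub>R b)}"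
      then have "c *\<^sub>R x = c *\<^sub>R (\<Sum>b\<in>Bs. (b \<bullet> x) *\<^sub>R b)" by simp
      also have "\<dots> = (\<Sum>b\<in>Bs. (b \<bullet> (c *\<^sub>R x)) *\<^sub>R b)" by (simp add: scaleR_sum_right)
      finally show "c *\<^sub>R x \<in> {y. y = (\<Sum>b\<in>Bs. (b \<bullet> y) *\<^sub>R b)}" by (simp only: mem_Collect_eq)
    qed (auto simp: inner_add_right scaleR_add_left sum.distrib)
  qed
  then show ?thesis using c by blast
qed
theorem proposition2:
  fixes W :: "real^'n^'n" and k :: real and r :: nat
  assumes "transpose W = W"
    and "psd W"
    and "trace W = 1"
    and "(\<Sum>i\<in>UNIV. \<Sum>j\<in>UNIV. \<bar>W $ i $ j\<bar>) \<le> k"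
    and "rank W = r"
  shows "(\<Sum>i\<in>UNIV. sqrt (W $ i $ i)) \<le> sqrt (real r * k)"
proof -
  define dd where "dd i = (if 0 < W$i$i then 1 / sqrt (sqrt (W$i$i)) else 0)" for i
  define D :: "real^'n^'n" where "D = (\<chi> i j. if i = j then dd i else 0)"
  define Bm :: "real^'n^'n" where "Bm = (\<chi> i j. dd i * W$i$j * dd j)"
  have Bm_eq: "Bm = D ** W ** D"
    unfolding Bm_def D_def by (simp add: matrix_matrix_mult_def vec_eq_iff if_distrib if_distribR cong: if_cong)
  have rk: "rank Bm \<le> r"
    using rank_mul_le_left[of "D ** W" D] rank_mul_le_right[of D W] assms(5) Bm_eq by simp
  have diag: "0 \<le> W$i$i" for i using psd_entry[OF assms(1,2)] by blast
  have absb: "\<bar>W$i$j\<bar> \<le> sqrt (W$i$i) * sqrt (W$j$j)" for i j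
  proof -
    have "sqrt ((W$i$j)^2) \<le> sqrt (W$i$i * W$j$j)" using psd_entry[OF assms(1,2)] by (simp only: real_sqrt_le_iff)
    then show ?thesis by (simp add: real_sqrt_mult)
  qed
  have entry: "(Bm$i$j)^2 \<le> \<bar>W$i$j\<bar>" for i j
  proof (cases "0 < W$i$i \<and> 0 < W$j$j")
    case True
    have si: "0 < sqrt (W$i$i)" "0 < sqrt (W$j$j)" using True by auto
    have "(Bm$i$j)^2 = (W$i$j)^2 / (sqrt (W$i$i) * sqrt (W$j$j))"
      using True si unfolding Bm_def dd_def by (simp add: power2_eq_square field_simps real_sqrt_mult[symmetric])
    also have "\<dots> = \<bar>W$i$j\<bar> * (\<bar>W$i$j\<bar> / (sqrt (W$i$i) * sqrt (W$j$j)))"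
      by (simp add: power2_eq_square)
    also have "\<dots> \<le> \<bar>W$i$j\<bar> * 1"
      using absb[of i j] si by (intro mult_left_mono) (auto simp: divide_le_eq_1)
    finally show ?thesis by simp
  next
    case False
    then have "dd i = 0 \<or> dd j = 0" unfolding dd_def by auto
    then show ?thesis unfolding Bm_def by auto
  qed
  have trB: "Bm$j$j = sqrt (W$j$j)" for j
  proof (cases "0 < W$j$j")
    case True
    then have "0 < sqrt (W$j$j)" by simp
    then have "W$j$j = sqrt (W$j$j) * sqrt (W$j$j)" using diag[of j] by simp
    then show ?thesis using True unfolding Bm_def dd_def
      by (simp add: field_simps real_sqrt_mult[symmetric])
  next
    case False then show ?thesis using diag[of j] unfolding Bm_def dd_def by simp
  qed
  define S where "S = span (columns Bm)"
  have "subspace S" unfolding S_def by simp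
  obtain Bs where Bs: "Bs \<subseteq> S" "pairwise orthogonal Bs" "\<And>x. x \<in> Bs \<Longrightarrow> norm x = 1"
    "independent Bs" "card Bs = dim S" "span Bs = S"
    using orthonormal_basis_subspace[OF \<open>subspace S\<close>] by blast
  have fin: "finite Bs" using Bs(4) by (rule independent_imp_finite)
  have cardBs: "card Bs \<le> r" using Bs(5) rk unfolding S_def by (simp add: column_rank_def dim_span)
  define c where "c j = column j Bm" for j
  have cS: "c j \<in> span Bs" for j using Bs(6) unfolding S_def c_def columns_def
    by (auto intro: span_base)
  have cexp: "c j = (\<Sum>b\<in>Bs. (b \<bullet> c j) *\<^sub>R b)" for j
    by (rule expand[OF fin Bs(2) Bs(3) cS])
  have pars: "c j \<bullet> c j = (\<Sum>b\<in>Bs. (b \<bullet> c j)^2)" for j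
  proof -
    have "c j \<bullet> c j = c j \<bullet> (\<Sum>b\<in>Bs. (b \<bullet> c j) *\<^sub>R b)" using cexp[of j] by simp
    also have "\<dots> = (\<Sum>b\<in>Bs. (b \<bullet> c j)^2)"
      by (simp add: inner_sum_right power2_eq_square inner_commute)
    finally show ?thesis .
  qed
  define s where "s = (\<Sum>i\<in>UNIV. sqrt (W $ i $ i))"
  have "s = (\<Sum>j\<in>UNIV. c j $ j)" unfolding s_def c_def by (simp add: trB column_def)
  also have "\<dots> = (\<Sum>j\<in>UNIV. \<Sum>b\<in>Bs. b$j * (b \<bullet> c j))"
    by (subst cexp) (simp add: sum_component mult.commute)
  also have "\<dots> = (\<Sum>(j,b)\<in>UNIV \<times> Bs. b$j * (b \<bullet> c j))"
    by (rule sum.cartesian_product)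
  finally have s_eq: "s = (\<Sum>(j,b)\<in>UNIV \<times> Bs. b$j * (b \<bullet> c j))" .
  have cs: "s^2 \<le> (\<Sum>(j,b)\<in>UNIV \<times> Bs. (b$j)^2) * (\<Sum>(j,b)\<in>UNIV \<times> Bs. (b \<bullet> c j)^2)"
    unfolding s_eq using Cauchy_Schwarz_ineq_sum[of "\<lambda>p. snd p $ fst p" "\<lambda>p. snd p \<bullet> c (fst p)" "UNIV \<times> Bs"]
    by (simp add: case_prod_beta)
  have A: "(\<Sum>(j,b)\<in>UNIV \<times> Bs. (b$j)^2) = real (card Bs)"
  proof -
    have "(\<Sum>(j,b)\<in>UNIV \<times> Bs. (b$j)^2) = (\<Sum>j\<in>UNIV. \<Sum>b\<in>Bs. (b$j)^2)"
      by (rule sum.cartesian_product[symmetric])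
    also have "\<dots> = (\<Sum>b\<in>Bs. \<Sum>j\<in>UNIV. (b$j)^2)" by (rule sum.swap)
    also have "\<dots> = (\<Sum>b\<in>Bs. b \<bullet> b)" by (simp add: inner_vec_def power2_eq_square)
    also have "\<dots> = (\<Sum>b\<in>Bs. 1)" using Bs(3) by (intro sum.cong) (auto simp: norm_eq_1)
    finally show ?thesis by simp
  qed
  have B: "(\<Sum>(j,b)\<in>UNIV \<times> Bs. (b \<bullet> c j)^2) \<le> k"
  proof -
    have "(\<Sum>(j,b)\<in>UNIV \<times> Bs. (b \<bullet> c j)^2) = (\<Sum>j\<in>UNIV. \<Sum>b\<in>Bs. (b \<bullet> c j)^2)"
      by (rule sum.cartesian_product[symmetric])
    also have "\<dots> = (\<Sum>j\<in>UNIV. c j \<bullet> c j)" by (simp add: pars)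
    also have "\<dots> = (\<Sum>j\<in>UNIV. \<Sum>i\<in>UNIV. (Bm$i$j)^2)" by (simp add: c_def column_def inner_vec_def power2_eq_square)
    also have "\<dots> \<le> (\<Sum>j\<in>UNIV. \<Sum>i\<in>UNIV. \<bar>W$i$j\<bar>)" by (intro sum_mono entry)
    also have "\<dots> = (\<Sum>i\<in>UNIV. \<Sum>j\<in>UNIV. \<bar>W$i$j\<bar>)" by (rule sum.swap)
    also have "\<dots> \<le> k" by (rule assms(4))
    finally show ?thesis .
  qed
  have "0 \<le> (\<Sum>i\<in>UNIV. \<Sum>j\<in>UNIV. \<bar>W $ i $ j\<bar>)" by (intro sum_nonneg) simp
  then have k0: "0 \<le> k" using assms(4) by linarith
  have "s^2 \<le> real (card Bs) * (\<Sum>(j,b)\<in>UNIV \<times> Bs. (b \<bullet> c j)^2)" using cs by (simp only: A)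
  also have "\<dots> \<le> real (card Bs) * k" using B by (intro mult_left_mono) auto
  finally have "s^2 \<le> real (card Bs) * k" .
  also have "\<dots> \<le> real r * k" using cardBs k0 by (intro mult_right_mono) auto
  finally have "s^2 \<le> real r * k" .
  then show ?thesis unfolding s_def[symmetric] by (rule real_le_rsqrt)
qed
end
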